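(* Let $\mathbf X=(X_1,\dots,X_k)$, $2\le k\le n-1$, be homogeneous coordinates of proper cycles, $S$ a vector with $(S\mid S)\le0$, with $X_1,\dots,X_k,S$ linearly independent and $\Delta(\mathbf X,S)<0$. Let $y$ be a proper cycle with $y\notin\langle\mathbf x,s\rangle$ and $(Y\mid S)\neq0$. Then there exists a proper cycle $z\in\langle\mathbf x,s\rangle^\perp$ with $(Z\mid Y)=0$ if and only if $\delta(\mathbf x,y,s)\le0$.
   Context: Let $n\ge 3$. For $X=(\xi_0,\boldsymbol\xi_1,\xi_2,\xi_3)$ and $Y=(\eta_0,\boldsymbol\eta_1,\eta_2,\eta_3)$ in $\mathbb{R}^{n+3}=\mathbb{R}\times\mathbb{R}^n\times\mathbb{R}\times\mathbb{R}$, the Lie product is the nondegenerate symmetric bilinear form $(X\mid Y)=\xi_0\eta_2+\boldsymbol\xi_1\cdot\boldsymbol\eta_1+\xi_2\eta_0-\xi_3\eta_3$. Points of $\mathbb{P}^{n+2}$ are cycles; lowercase letters denote cycles and uppercase letters their homogeneous coordinate vectors; a cycle is proper if $(X\mid X)=0$. For a list $\mathbf X$, $\langle\mathbf X\rangle$ is its span, $\langle\mathbf x\rangle$ the projective subspace, $\langle\mathbf x\rangle^\perp$ the projectivization of $\{Y:(X_i\mid Y)=0\ \forall i\}$, and $\Delta(\mathbf X)=\det[(X_i\mid X_j)]$. The discriminant of $(\mathbf x,y,s)$ is $\delta(\mathbf x,y,s)=\Delta(\mathbf X,Y,S)/(\Delta(\mathbf X,S)\Delta(Y,S))$. (Geometrically: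 the cofamily $\langle\mathbf x,s\rangle^\perp\cap\Omega$ contains a cycle tangent to $y$.) *)

theory Defs
  imports "HOL-Analysis.Analysis"
begin

text \<open>Vectors of R^{n+3} = R x R^n x R x R, with n = CARD('n).\<close>
type_synonym 'n lievec = "real \<times> (real ^ 'n) \<times> real \<times> real"

fun lie :: "'n::finite lievec \<Rightarrow> 'n lievec \<Rightarrow> real" where
  "lie (x0, x1, x2, x3) (y0, y1, y2, y3) = x0 * y2 + x1 \<bullet> y1 + x2 * y0 - x3 * y3"

definition gram_det :: "'n::finite lievec list \<Rightarrow> real" where
  "gram_det Xs = (let m = length Xs in
     \<Sum>p | p permutes {..<m}. of_int (sign p) * (\<Prod>i<m. lie (Xs ! i) (Xs ! (p i))))"

definition discr :: "'n::finite lievec list \<Rightarrow> 'n lievec \<Rightarrow> 'n lievec \<Rightarrow> real" where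
  "discr Xs Y S = gram_det (Xs @ [Y, S]) / (gram_det (Xs @ [S]) * gram_det [Y, S])"

definition proper :: "'n::finite lievec \<Rightarrow> bool" where
  "proper X \<longleftrightarrow> X \<noteq> 0 \<and> lie X X = 0"

end

theory Submission
  imports Defs "Jordan_Normal_Form.Determinant"
begin

lemma lie_sym: "lie x y = lie y x"
  by (cases x; cases y) (auto simp: inner_commute algebra_simps)

lemma lie_add_left: "lie (x + y) z = lie x z + lie y z"
  by (cases x; cases y; cases z) (auto simp: inner_add_left algebra_simps)

lemma lie_scale_left: "lie (c *\<^sub>R x) z = c * lie x z"
  by (cases x; cases z) (auto simp: algebra_simps)

lemma linear_lie_left: "linear (\<lambda>x. lie x z)"
  by (rule linearI) (auto simp: lie_add_left lie_scale_left)

lemma lie_add_right: "lie z (x + y) = lie z x + lie z y"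
  by (simp add: lie_sym[of z] lie_add_left)
lemma lie_scale_right: "lie z (c *\<^sub>R x) = c * lie z x"
  by (simp add: lie_sym[of z] lie_scale_left)
lemma lie_diff_left: "lie (x - y) z = lie x z - lie y z"
  using linear_diff[OF linear_lie_left] by blast
lemma lie_diff_right: "lie z (x - y) = lie z x - lie z y"
  by (simp add: lie_sym[of z] lie_diff_left)
lemma lie_zero_left[simp]: "lie 0 z = 0"
  using linear_0[OF linear_lie_left] by blast
lemma lie_zero_right[simp]: "lie z 0 = 0"
  by (simp add: lie_sym[of z])
lemma lie_sum_left: "lie (\<Sum>i\<in>A. f i) z = (\<Sum>i\<in>A. lie (f i) z)"
  using linear_sum[OF linear_lie_left] by blast
lemma lie_sum_right: "lie z (\<Sum>i\<in>A. f i) = (\<Sum>i\<in>A. lie z (f i))"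
  by (simp add: lie_sym[of z] lie_sum_left)

lemma lie_span_zero:
  assumes "\<forall>b\<in>B. lie b z = 0" "x \<in> span B"
  shows "lie x z = 0"
proof -
  have "subspace {x. lie x z = 0}"
    by (auto simp: subspace_def lie_add_left lie_scale_left)
  then show ?thesis using assms span_minimal[of B "{x. lie x z = 0}"] by auto
qed

lemma kernel3_wit:
  fixes a b c p1 p2 p3 q1 q2 q3 :: real
  shows "(a \<noteq> 0 \<or> b \<noteq> 0 \<or> c \<noteq> 0) \<Longrightarrow> a*p1+b*p2+c*p3 = 0 \<Longrightarrow> a*q1+b*q2+c*q3 = 0 \<Longrightarrow>
    \<exists>a b c. (a \<noteq> 0 \<or> b \<noteq> 0 \<or> c \<noteq> 0) \<and> a*p1+b*p2+c*p3 = 0 \<and> a*q1+b*q2+c*q3 = 0"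
  by (rule exI[of _ a], rule exI[of _ b], rule exI[of _ c]) simp

lemma kernel3:
  fixes p1 p2 p3 q1 q2 q3 :: real
  shows "\<exists>a b c. (a \<noteq> 0 \<or> b \<noteq> 0 \<or> c \<noteq> 0) \<and> a*p1+b*p2+c*p3 = 0 \<and> a*q1+b*q2+c*q3 = 0"
proof -
  define c1 where "c1 = p2*q3 - p3*q2"
  define c2 where "c2 = p3*q1 - p1*q3"
  define c3 where "c3 = p1*q2 - p2*q1"
  have e1: "c1*p1+c2*p2+c3*p3 = 0" unfolding c1_def c2_def c3_def by (simp add: algebra_simps)
  have e2: "c1*q1+c2*q2+c3*q3 = 0" unfolding c1_def c2_def c3_def by (simp add: algebra_simps)
  show ?thesis
  proof (cases "c1 \<noteq> 0 \<or> c2 \<noteq> 0 \<or> c3 \<noteq> 0")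
    case True
    then show ?thesis using e1 e2 by (rule kernel3_wit)
  next
    case F: False
    show ?thesis
    proof (cases "p1 \<noteq> 0 \<or> p2 \<noteq> 0")
      case True
      have "p2 \<noteq> 0 \<or> -p1 \<noteq> 0 \<or> (0::real) \<noteq> 0" using True by auto
      moreover have "p2*p1+(-p1)*p2+0*p3 = 0" by simp
      moreover have "p2*q1+(-p1)*q2+0*q3 = 0" using F unfolding c3_def by simp
      ultimately show ?thesis by (rule kernel3_wit)
    next
      case F2: False
      show ?thesis
      proof (cases "p3 \<noteq> 0")
        case True
        have "p3 * q1 = 0" using F F2 unfolding c2_def by simp
        then have "q1 = 0" using True by simp
        then have "1*p1+0*p2+0*p3 = 0" "1*q1+0*q2+0*q3 = 0" using F2 by auto
        then show ?thesis by (intro kernel3_wit[of 1 0 0]) auto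
      next
        case False
        with F2 have p: "p1 = 0" "p2 = 0" "p3 = 0" by auto
        show ?thesis
        proof (cases "q1 \<noteq> 0 \<or> q2 \<noteq> 0")
          case True
          have "q2 \<noteq> 0 \<or> -q1 \<noteq> 0 \<or> (0::real) \<noteq> 0" using True by auto
          moreover have "q2*p1+(-q1)*p2+0*p3 = 0" "q2*q1+(-q1)*q2+0*q3 = 0" using p by auto
          ultimately show ?thesis by (intro kernel3_wit[of q2 "-q1" 0]) auto
        next
          case False
          have "1*p1+0*p2+0*p3 = 0" "1*q1+0*q2+0*q3 = 0" using p False by auto
          then show ?thesis by (intro kernel3_wit[of 1 0 0]) auto
        qed
      qed
    qed
  qed
qed

lemma pos_part:
  fixes w :: "'n::finite lievec"
  assumes "fst w = fst (snd (snd w))" "snd (snd (snd w)) = 0" "lie w w \<le> 0"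
  shows "w = 0"
proof -
  obtain a x b d where w: "w = (a, x, b, d)" by (cases w) auto
  have ab: "b = a" "d = 0" using assms w by auto
  have "lie w w = 2 * (a * a) + x \<bullet> x" using ab w by simp
  moreover have x0: "x \<bullet> x \<ge> 0" by simp
  moreover have a0: "a * a \<ge> 0" by simp
  ultimately have aa: "a * a = 0" and xx: "x \<bullet> x = 0" using assms(3) by linarith+
  from aa have "a = 0" by simp
  moreover from xx have "x = 0" by (simp only: inner_eq_zero_iff)
  ultimately have "a = 0" "x = 0" by auto
  then show ?thesis using ab w by (simp add: zero_prod_def)
qed

lemma neg3:
  fixes u v z :: "'n::finite lievec"
  assumes "lie u v = 0" "lie u z = 0" "lie v z = 0" "lie u u < 0" "lie v v < 0" "lie z z \<le> 0" "z \<noteq> 0"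
  shows False
proof -
  define f :: "'n lievec \<Rightarrow> real" where "f w = fst w - fst (snd (snd w))" for w
  define g :: "'n lievec \<Rightarrow> real" where "g w = snd (snd (snd w))" for w
  obtain a b c where abc: "a \<noteq> 0 \<or> b \<noteq> 0 \<or> c \<noteq> 0"
    "a * f u + b * f v + c * f z = 0" "a * g u + b * g v + c * g z = 0"
    using kernel3[of "f u" "f v" "f z" "g u" "g v" "g z"] by blast
  define w where "w = a *\<^sub>R u + b *\<^sub>R v + c *\<^sub>R z"
  have fadd: "f (x + y) = f x + f y" for x y by (cases x; cases y) (simp add: f_def)
  have fsc: "f (r *\<^sub>R x) = r * f x" for r x by (cases x) (simp add: f_def right_diff_distrib)
  have fw0: "f w = a * f u + b * f v + c * f z"
    unfolding w_def by (simp only: fadd fsc)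
  have fw: "f w = 0" using abc(2) fw0 by simp
  have gadd: "g (x + y) = g x + g y" for x y by (cases x; cases y) (simp add: g_def)
  have gsc: "g (r *\<^sub>R x) = r * g x" for r x by (cases x) (simp add: g_def)
  have gw: "g w = 0" using abc(3) unfolding w_def by (simp only: gadd gsc)
  have L: "lie w y = a * lie u y + b * lie v y + c * lie z y" for y
    by (simp add: w_def lie_add_left lie_scale_left)
  have Lu: "lie u w = a * lie u u" using L[of u] assms(1,2) by (simp add: lie_sym)
  have Lv: "lie v w = b * lie v v" using L[of v] assms(1,3) by (simp add: lie_sym)
  have Lz: "lie z w = c * lie z z" using L[of z] assms(2,3) by (simp add: lie_sym)
  have Q: "lie w w = a*a * lie u u + b*b * lie v v + c*c * lie z z"
    using L[of w] Lu Lv Lz by (simp add: mult.assoc)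
  have t1: "a*a * lie u u \<le> 0" using assms(4) by (simp add: mult_nonneg_nonpos)
  have t2: "b*b * lie v v \<le> 0" using assms(5) by (simp add: mult_nonneg_nonpos)
  have t3: "c*c * lie z z \<le> 0" using assms(6) by (simp add: mult_nonneg_nonpos)
  have "lie w w \<le> 0" using Q t1 t2 t3 by linarith
  then have "w = 0" using pos_part[of w] fw gw unfolding f_def g_def by simp
  then have "lie w w = 0" by simp
  with Q t1 t2 t3 have "a*a * lie u u = 0" "b*b * lie v v = 0" by linarith+
  with assms(4,5) have ab: "a = 0" "b = 0" by auto
  with \<open>w = 0\<close> have "c *\<^sub>R z = 0" by (simp add: w_def)
  with assms(7) have "c = 0" by simp
  with ab abc(1) show False by simp
qed

definition orthset :: "'n::finite lievec set \<Rightarrow> bool" where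
  "orthset F \<longleftrightarrow> (\<forall>x\<in>F. \<forall>y\<in>F. x \<noteq> y \<longrightarrow> lie x y = 0)"

lemma span_sub: "A \<subseteq> span B \<Longrightarrow> span A \<subseteq> span B"
  using span_minimal subspace_span by blast

lemma orth_basis_exists:
  fixes B :: "'n::finite lievec set"
  assumes "finite B"
  shows "\<exists>E. finite E \<and> card E \<le> card B \<and> span E = span B \<and> orthset E"
  using assms
proof (induction "card B" arbitrary: B rule: less_induct)
  case less
  show ?case
  proof (cases "\<exists>x\<in>B. \<exists>y\<in>B. lie x y \<noteq> 0")
    case False
    then show ?thesis using less.prems by (intro exI[of _ B]) (auto simp: orthset_def)
  next
    case True
    then obtain x y where xy: "x \<in> B" "y \<in> B" "lie x y \<noteq> 0" by blast
    have "\<exists>a b. b \<in> B \<and> a \<in> span B \<and> b \<in> span (insert a (B - {b})) \<and> lie a a \<noteq> 0"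
    proof (cases "lie x x \<noteq> 0")
      case True
      then show ?thesis using xy by (intro exI[of _ x]) (auto intro: span_base)
    next
      case F1: False
      show ?thesis
      proof (cases "lie y y \<noteq> 0")
        case True
        then show ?thesis using xy by (intro exI[of _ y]) (auto intro: span_base)
      next
        case F2: False
        have "x \<noteq> y" using F1 xy by auto
        have aa: "lie (x + y) (x + y) = 2 * lie x y"
          using F1 F2 by (simp add: lie_add_left lie_add_right lie_sym[of y x])
        have "x + y \<in> span B" using xy by (auto intro: span_add span_base)
        moreover have "x \<in> span (insert (x + y) (B - {x}))"
        proof -
          have "x + y \<in> span (insert (x + y) (B - {x}))" by (auto intro: span_base)
          moreover have "y \<in> span (insert (x + y) (B - {x}))" using xy \<open>x \<noteq> y\<close> by (auto intro: span_base)
          ultimately have "(x + y) - y \<in> span (insert (x + y) (B - {x}))" by (rule span_diff)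
          then show ?thesis by simp
        qed
        ultimately show ?thesis using xy aa by (intro exI[of _ "x + y"] exI[of _ x]) auto
      qed
    qed
    then obtain a b where ab: "b \<in> B" "a \<in> span B" "b \<in> span (insert a (B - {b}))" "lie a a \<noteq> 0"
      by blast
    define p where "p v = v - (lie v a / lie a a) *\<^sub>R a" for v
    define B' where "B' = p ` (B - {b})"
    have cB': "card B' < card B"
      using card_image_le[of "B - {b}" p] card_Diff1_less[OF less.prems ab(1)] less.prems
      unfolding B'_def by auto
    have fB': "finite B'" using less.prems unfolding B'_def by auto
    obtain E' where E': "finite E'" "card E' \<le> card B'" "span E' = span B'" "orthset E'"
      using less.hyps[OF cB' fB'] by blast
    have pa: "lie (p v) a = 0" for v
      using ab(4) by (simp add: p_def lie_diff_left lie_scale_left)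
    have E'a: "lie e a = 0" if "e \<in> E'" for e
    proof -
      have "e \<in> span B'" using that E'(3) span_base by blast
      then show ?thesis using lie_span_zero[of B' a e] pa unfolding B'_def by auto
    qed
    have "span (insert a B') = span B"
    proof -
      have "p v \<in> span B" if "v \<in> B" for v
        unfolding p_def by (rule span_diff[OF span_base[OF that] span_scale[OF ab(2)]])
      then have "insert a B' \<subseteq> span B"
        using ab(2) unfolding B'_def by blast
      moreover have "B \<subseteq> span (insert a B')"
      proof -
        have sub: "insert a (B - {b}) \<subseteq> span (insert a B')"
        proof
          fix v assume v: "v \<in> insert a (B - {b})"
          show "v \<in> span (insert a B')"
          proof (cases "v = a")
            case True then show ?thesis by (auto intro: span_base)
          next
            case False
            then have "v \<in> B - {b}" using v by auto
            then have "p v \<in> span (insert a B')" unfolding B'_def by (auto intro: span_base)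
            moreover have "(lie v a / lie a a) *\<^sub>R a \<in> span (insert a B')"
              by (auto intro: span_base span_scale)
            ultimately have "p v + (lie v a / lie a a) *\<^sub>R a \<in> span (insert a B')"
              by (rule span_add)
            then show ?thesis by (simp add: p_def)
          qed
        qed
        show ?thesis
        proof
          fix v assume "v \<in> B"
          show "v \<in> span (insert a B')"
          proof (cases "v = b")
            case True
            then show ?thesis using ab(3) span_sub[OF sub] by auto
          next
            case False
            then show ?thesis using sub \<open>v \<in> B\<close> by auto
          qed
        qed
      qed
      ultimately show ?thesis by (intro subset_antisym span_sub)
    qed
    moreover have "span (insert a E') = span (insert a B')"
      using E'(3) by (simp add: span_insert)
    moreover have "orthset (insert a E')"
    proof -
      have "lie a e = 0" if "e \<in> E'" for e using E'a[OF that] lie_sym[of a e] by simp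
      then show ?thesis using E'(4) E'a unfolding orthset_def by auto
    qed
    moreover have "card (insert a E') \<le> card B"
    proof -
      have "card (insert a E') \<le> Suc (card E')" by (simp add: card_insert_if E'(1))
      then show ?thesis using E'(2) cB' by linarith
    qed
    ultimately show ?thesis using E'(1) by (intro exI[of _ "insert a E'"]) auto
  qed
qed

definition pr :: "'n::finite lievec set \<Rightarrow> 'n lievec \<Rightarrow> 'n lievec" where
  "pr F x = (\<Sum>b\<in>F. (lie x b / lie b b) *\<^sub>R b)"

definition goodset :: "'n::finite lievec set \<Rightarrow> bool" where
  "goodset F \<longleftrightarrow> finite F \<and> orthset F \<and> (\<forall>b\<in>F. lie b b \<noteq> 0)"

lemma pr_span: "pr F x \<in> span F"
  unfolding pr_def by (intro span_sum span_scale span_base)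

lemma pr_lie:
  assumes "goodset F" "b \<in> F"
  shows "lie (pr F x) b = lie x b"
proof -
  have fin: "finite F" and o: "orthset F" and nz: "lie b b \<noteq> 0"
    using assms unfolding goodset_def by auto
  have "lie (pr F x) b = (\<Sum>c\<in>F. (lie x c / lie c c) * lie c b)"
    unfolding pr_def by (simp add: lie_sum_left lie_scale_left)
  also have "\<dots> = (lie x b / lie b b) * lie b b + (\<Sum>c\<in>F - {b}. (lie x c / lie c c) * lie c b)"
    using fin assms(2) by (simp add: sum.remove)
  also have "(\<Sum>c\<in>F - {b}. (lie x c / lie c c) * lie c b) = 0"
    using o assms(2) unfolding orthset_def by (intro sum.neutral) auto
  finally show ?thesis using nz by simp
qed

lemma res_orth_base:
  assumes "goodset F" "b \<in> F"
  shows "lie b (x - pr F x) = 0"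
  using pr_lie[OF assms, of x] by (simp add: lie_diff_right lie_sym[of b])

lemma res_orth:
  assumes "goodset F" "v \<in> span F"
  shows "lie v (x - pr F x) = 0"
  using lie_span_zero[of F "x - pr F x" v] res_orth_base[OF assms(1)] assms(2) by blast

lemma pr_Q:
  assumes "goodset F"
  shows "lie (pr F x) (pr F x) = (\<Sum>b\<in>F. (lie x b)^2 / lie b b)"
proof -
  have "lie (pr F x) (x - pr F x) = 0" using res_orth[OF assms pr_span] .
  then have "lie (pr F x) (pr F x) = lie (pr F x) x" by (simp add: lie_diff_right)
  also have "\<dots> = (\<Sum>b\<in>F. (lie x b / lie b b) * lie b x)"
    unfolding pr_def by (simp add: lie_sum_left lie_scale_left)
  also have "\<dots> = (\<Sum>b\<in>F. (lie x b)^2 / lie b b)"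
    by (intro sum.cong) (auto simp: lie_sym[of _ x] power2_eq_square)
  finally show ?thesis .
qed

lemma Q_split:
  assumes "goodset F"
  shows "lie x x = lie (pr F x) (pr F x) + lie (x - pr F x) (x - pr F x)"
proof -
  have o: "lie (pr F x) (x - pr F x) = 0" using res_orth[OF assms pr_span] .
  then have o2: "lie (x - pr F x) (pr F x) = 0" by (simp add: lie_sym)
  have "x = pr F x + (x - pr F x)" by simp
  then have "lie x x = lie (pr F x + (x - pr F x)) (pr F x + (x - pr F x))" by simp
  also have "\<dots> = lie (pr F x) (pr F x) + lie (x - pr F x) (x - pr F x)"
    unfolding lie_add_left lie_add_right using o o2 by simp
  finally show ?thesis .
qed

definition gmat :: "'n::finite lievec list \<Rightarrow> real Matrix.mat" where
  "gmat L = Matrix.mat (length L) (length L) (\<lambda>(i,j). lie (L!i) (L!j))"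

lemma gmat_carrier: "gmat L \<in> carrier_mat (length L) (length L)"
  unfolding gmat_def by simp

lemma gram_det_gmat: "gram_det L = Determinant.det (gmat L)"
proof -
  let ?m = "length L"
  have "gram_det L = (\<Sum>p | p permutes {0..<?m}. of_int (sign p) * (\<Prod>i=0..<?m. lie (L ! i) (L ! (p i))))"
    unfolding gram_det_def Let_def by (simp add: atLeast0LessThan)
  also have "\<dots> = (\<Sum>p | p permutes {0..<?m}. of_int (sign p) * (\<Prod>i=0..<?m. gmat L $$ (i, p i)))"
  proof (intro sum.cong refl arg_cong2[where f="(*)"] prod.cong)
    fix p i assume "p \<in> {p. p permutes {0..<?m}}" "i \<in> {0..<?m}"
    then have "p i < ?m" "i < ?m" using permutes_in_image by fastforce+
    then show "lie (L ! i) (L ! (p i)) = gmat L $$ (i, p i)" unfolding gmat_def by simp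
  qed
  also have "\<dots> = Determinant.det (gmat L)"
    unfolding Determinant.det_def by (simp add: gmat_def)
  finally show ?thesis .
qed

lemma gram_cob:
  assumes lL: "length L = m" and lE: "length E = m"
    and rep: "\<forall>i<m. L!i = (\<Sum>j<m. C i j *\<^sub>R E!j)"
  shows "gram_det L = (Determinant.det (Matrix.mat m m (\<lambda>(i,j). C i j)))^2 * gram_det E"
proof -
  define Cm where "Cm = Matrix.mat m m (\<lambda>(i,j). C i j)"
  have Cc: "Cm \<in> carrier_mat m m" unfolding Cm_def by simp
  have Gc: "gmat E \<in> carrier_mat m m" using gmat_carrier[of E] lE by simp
  have eq: "gmat L = Cm * gmat E * Cm\<^sup>T"
  proof (rule eq_matI)
    show "dim_row (gmat L) = dim_row (Cm * gmat E * Cm\<^sup>T)" using lL by (simp add: gmat_def Cm_def)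
    show "dim_col (gmat L) = dim_col (Cm * gmat E * Cm\<^sup>T)" using lL by (simp add: gmat_def Cm_def)
    fix i k assume "i < dim_row (Cm * gmat E * Cm\<^sup>T)" "k < dim_col (Cm * gmat E * Cm\<^sup>T)"
    then have ik: "i < m" "k < m" by (simp_all add: Cm_def)
    have "(Cm * gmat E * Cm\<^sup>T) $$ (i,k) = (\<Sum>l=0..<m. (\<Sum>j=0..<m. C i j * lie (E!j) (E!l)) * C k l)"
      using ik lE by (simp add: Cm_def gmat_def scalar_prod_def)
    also have "\<dots> = (\<Sum>j=0..<m. C i j * (\<Sum>l=0..<m. C k l * lie (E!j) (E!l)))"
    proof -
      have "(\<Sum>l=0..<m. (\<Sum>j=0..<m. C i j * lie (E!j) (E!l)) * C k l) =
        (\<Sum>l=0..<m. \<Sum>j=0..<m. C i j * (C k l * lie (E!j) (E!l)))"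
        unfolding sum_distrib_right by (simp add: mult_ac)
      also have "\<dots> = (\<Sum>j=0..<m. \<Sum>l=0..<m. C i j * (C k l * lie (E!j) (E!l)))"
        by (rule sum.swap)
      also have "\<dots> = (\<Sum>j=0..<m. C i j * (\<Sum>l=0..<m. C k l * lie (E!j) (E!l)))"
        by (simp add: sum_distrib_left)
      finally show ?thesis .
    qed
    also have "\<dots> = lie (L!i) (L!k)"
    proof -
      have "lie (L!i) (L!k) = (\<Sum>j<m. C i j * lie (E!j) (L!k))"
        by (subst rep[rule_format, OF ik(1)]) (simp add: lie_sum_left lie_scale_left)
      also have "\<dots> = (\<Sum>j<m. C i j * (\<Sum>l<m. C k l * lie (E!j) (E!l)))"
        by (subst rep[rule_format, OF ik(2)]) (simp add: lie_sum_right lie_scale_right)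
      finally show ?thesis by (simp add: atLeast0LessThan)
    qed
    also have "\<dots> = gmat L $$ (i,k)" using ik lL by (simp add: gmat_def)
    finally show "gmat L $$ (i,k) = (Cm * gmat E * Cm\<^sup>T) $$ (i,k)" by simp
  qed
  have "gram_det L = Determinant.det (Cm * gmat E * Cm\<^sup>T)" by (simp only: gram_det_gmat eq)
  also have "\<dots> = Determinant.det Cm * Determinant.det (gmat E) * Determinant.det Cm\<^sup>T"
    using Cc Gc by (simp add: det_mult[of _ m] det_transpose)
  also have "\<dots> = (Determinant.det Cm)^2 * gram_det E"
    using Cc by (simp add: det_transpose gram_det_gmat power2_eq_square)
  finally show ?thesis unfolding Cm_def .
qed

lemma gram_orth:
  assumes "\<forall>i<length E. \<forall>j<length E. i \<noteq> j \<longrightarrow> lie (E!i) (E!j) = 0"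
  shows "gram_det E = (\<Prod>i<length E. lie (E!i) (E!i))"
proof -
  have "upper_triangular (gmat E)"
    using assms unfolding upper_triangular_def gmat_def by auto
  then have "Determinant.det (gmat E) = prod_list (diag_mat (gmat E))"
    using det_upper_triangular gmat_carrier by blast
  also have "\<dots> = prod_list (map (\<lambda>i. lie (E!i) (E!i)) [0..<length E])"
    unfolding diag_mat_def gmat_def by (intro arg_cong[where f=prod_list] map_cong) auto
  also have "\<dots> = (\<Prod>i<length E. lie (E!i) (E!i))"
    by (simp add: prod.distinct_set_conv_list[symmetric] atLeast0LessThan)
  finally show ?thesis by (simp add: gram_det_gmat)
qed

lemma gram_laplace:
  assumes "\<forall>j<length Xs. lie P (Xs!j) = 0" "lie P S = 0"
  shows "gram_det (Xs @ [P, S]) = lie P P * gram_det (Xs @ [S])"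
proof -
  let ?k = "length Xs"
  let ?A = "gmat (Xs @ [P, S])"
  have Ac: "?A \<in> carrier_mat (?k+2) (?k+2)" using gmat_carrier[of "Xs @ [P,S]"] by simp
  have "Determinant.det ?A = (\<Sum>j<?k+2. ?A $$ (?k, j) * cofactor ?A ?k j)"
    using laplace_expansion_row[OF Ac, of ?k] by simp
  also have "\<dots> = ?A $$ (?k, ?k) * cofactor ?A ?k ?k + (\<Sum>j\<in>{..<?k+2} - {?k}. ?A $$ (?k, j) * cofactor ?A ?k j)"
    by (subst sum.remove[of _ ?k]) auto
  also have "(\<Sum>j\<in>{..<?k+2} - {?k}. ?A $$ (?k, j) * cofactor ?A ?k j) = 0"
  proof (rule sum.neutral, rule ballI)
    fix j assume j: "j \<in> {..<?k+2} - {?k}"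
    have "?A $$ (?k, j) = lie P ((Xs @ [P, S]) ! j)" using j by (simp add: gmat_def nth_append)
    also have "\<dots> = 0"
    proof (cases "j < ?k")
      case True then show ?thesis using assms(1) by (simp add: nth_append)
    next
      case False
      then have "j = ?k + 1" using j by auto
      then show ?thesis using assms(2) by (simp add: nth_append)
    qed
    finally show "?A $$ (?k, j) * cofactor ?A ?k j = 0" by simp
  qed
  also have "?A $$ (?k, ?k) = lie P P" by (simp add: gmat_def nth_append)
  also have "cofactor ?A ?k ?k = Determinant.det (gmat (Xs @ [S]))"
  proof -
    have "mat_delete ?A ?k ?k = gmat (Xs @ [S])"
    proof (rule eq_matI)
      fix i j assume "i < dim_row (gmat (Xs @ [S]))" "j < dim_col (gmat (Xs @ [S]))"
      then have ij: "i < ?k + 1" "j < ?k + 1" by (simp_all add: gmat_def)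
      have e: "(Xs @ [P, S]) ! (if i < ?k then i else Suc i) = (Xs @ [S]) ! i" for i
        using ij by (auto simp: nth_append)
      have "mat_delete ?A ?k ?k $$ (i, j) =
        ?A $$ (if i < ?k then i else Suc i, if j < ?k then j else Suc j)"
        unfolding mat_delete_def using ij by (simp add: gmat_def)
      also have "\<dots> = lie ((Xs @ [P, S]) ! (if i < ?k then i else Suc i)) ((Xs @ [P, S]) ! (if j < ?k then j else Suc j))"
        using ij by (simp add: gmat_def)
      also have "\<dots> = gmat (Xs @ [S]) $$ (i, j)"
        using ij by (simp add: gmat_def nth_append)
      finally show "mat_delete ?A ?k ?k $$ (i, j) = gmat (Xs @ [S]) $$ (i, j)" .
    qed (simp_all add: gmat_def)
    moreover have "(-1::real) ^ (?k + ?k) = 1" by (simp flip: mult_2 add: power_mult)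
    ultimately show ?thesis unfolding cofactor_def by simp
  qed
  finally show ?thesis by (simp add: gram_det_gmat)
qed

lemma gram2: "gram_det [Y, S] = lie Y Y * lie S S - lie Y S * lie S Y"
proof -
  let ?A = "gmat [Y, S]"
  have Ac: "?A \<in> carrier_mat 2 2" using gmat_carrier[of "[Y,S]"] by (simp add: numeral_2_eq_2)
  have "Determinant.det ?A = (\<Sum>j<2. ?A $$ (0, j) * cofactor ?A 0 j)"
    using laplace_expansion_row[OF Ac, of 0] by simp
  also have "\<dots> = ?A $$ (0, 0) * cofactor ?A 0 0 + ?A $$ (0, 1) * cofactor ?A 0 1"
    by (simp add: numeral_2_eq_2)
  also have "cofactor ?A 0 0 = lie S S"
    unfolding cofactor_def
    by (subst det_single) (auto simp: mat_delete_def gmat_def)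
  also have "cofactor ?A 0 1 = - lie S Y"
    unfolding cofactor_def
    by (subst det_single) (auto simp: mat_delete_def gmat_def)
  finally show ?thesis by (simp add: gram_det_gmat gmat_def)
qed

lemma list_span_rep:
  assumes "distinct El" "x \<in> span (set El)"
  shows "\<exists>c. x = (\<Sum>j<length El. c j *\<^sub>R El!j)"
proof -
  obtain u where u: "x = (\<Sum>v\<in>set El. u v *\<^sub>R v)"
    using assms(2) span_finite[of "set El"] by auto
  also have "\<dots> = sum_list (map (\<lambda>v. u v *\<^sub>R v) El)"
    using assms(1) by (rule sum.distinct_set_conv_list)
  also have "\<dots> = (\<Sum>j<length El. u (El!j) *\<^sub>R El!j)"
    by (simp add: sum_list_sum_nth atLeast0LessThan)
  finally show ?thesis by (intro exI[of _ "\<lambda>j. u (El!j)"])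
qed

lemma det_unitri:
  assumes "A \<in> carrier_mat n n" "\<forall>i<n. A $$ (i,i) = 1"
    "(\<forall>i j. i < j \<longrightarrow> j < n \<longrightarrow> A $$ (i,j) = 0) \<or> (\<forall>i j. j < i \<longrightarrow> i < n \<longrightarrow> A $$ (i,j) = 0)"
  shows "Determinant.det A = 1"
proof -
  have "Determinant.det A = prod_list (diag_mat A)"
    using assms(3)
  proof
    assume "\<forall>i j. i < j \<longrightarrow> j < n \<longrightarrow> A $$ (i,j) = 0"
    then show ?thesis using det_lower_triangular[of n A] assms(1) by blast
  next
    assume h: "\<forall>i j. j < i \<longrightarrow> i < n \<longrightarrow> A $$ (i,j) = 0"
    have "upper_triangular A" using h assms(1) unfolding upper_triangular_def by auto
    then show ?thesis using det_upper_triangular assms(1) by blast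
  qed
  also have "\<dots> = 1" using assms(1,2) by (simp add: prod_list_diag_prod)
  finally show ?thesis .
qed

lemma basis_setup:
  fixes L0 :: "'n::finite lievec list"
  assumes dist: "distinct L0" and ind: "independent (set L0)" and neg: "gram_det L0 < 0"
  shows "\<exists>E e. goodset E \<and> span E = span (set L0) \<and> card E = length L0 \<and> e \<in> E \<and>
    lie e e < 0 \<and> (\<forall>b\<in>E - {e}. lie b b > 0)"
proof -
  let ?m = "length L0"
  have cB: "card (set L0) = ?m" using dist by (rule distinct_card)
  obtain E where E: "finite E" "card E \<le> card (set L0)" "span E = span (set L0)" "orthset E"
    using orth_basis_exists[of "set L0"] by auto
  have "dim (set L0) = ?m" using dim_eq_card_independent[OF ind] cB by simp
  moreover have "dim E = dim (set L0)"
  proof -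
    have "dim (span E) = dim (span (set L0))" using E(3) by simp
    then show ?thesis by (simp only: dim_span)
  qed
  ultimately have "?m = dim E" by simp
  also have "\<dots> \<le> card E" using E(1) by (rule dim_le_card')
  finally have cE: "card E = ?m" using E(2) cB by simp
  obtain El where El: "set El = E" "distinct El" using finite_distinct_list[OF E(1)] by blast
  have lEl: "length El = ?m" using distinct_card[OF El(2)] El(1) cE by simp
  have "\<forall>i\<in>{..<?m}. \<exists>c. L0!i = (\<Sum>j<?m. c j *\<^sub>R El!j)"
  proof
    fix i assume "i \<in> {..<?m}"
    then have "L0!i \<in> set L0" by simp
    then have "L0!i \<in> span (set El)" using E(3) El(1) span_base by blast
    then obtain c where "L0!i = (\<Sum>j<length El. c j *\<^sub>R El!j)"
      using list_span_rep[OF El(2)] by blast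
    then show "\<exists>c. L0!i = (\<Sum>j<?m. c j *\<^sub>R El!j)" unfolding lEl by (rule exI[of _ c])
  qed
  then have "\<exists>C. \<forall>i\<in>{..<?m}. L0!i = (\<Sum>j<?m. C i j *\<^sub>R El!j)" by (rule bchoice)
  then obtain C where C: "\<forall>i\<in>{..<?m}. L0!i = (\<Sum>j<?m. C i j *\<^sub>R El!j)" ..
  have g: "gram_det L0 = (Determinant.det (Matrix.mat ?m ?m (\<lambda>(i,j). C i j)))^2 * gram_det El"
  proof (rule gram_cob)
    show "length El = ?m" by (rule lEl)
    show "\<forall>i<?m. L0!i = (\<Sum>j<?m. C i j *\<^sub>R El!j)" using C by blast
  qed simp
  have orthEl: "\<forall>i<length El. \<forall>j<length El. i \<noteq> j \<longrightarrow> lie (El!i) (El!j) = 0"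
  proof (intro allI impI)
    fix i j assume ij: "i < length El" "j < length El" "i \<noteq> j"
    then have "El!i \<in> E" "El!j \<in> E" using El(1) nth_mem by blast+
    moreover have "El!i \<noteq> El!j" using ij El(2) nth_eq_iff_index_eq by blast
    ultimately show "lie (El!i) (El!j) = 0" using E(4) unfolding orthset_def by blast
  qed
  have "gram_det El = (\<Prod>i<length El. lie (El!i) (El!i))" using orthEl by (rule gram_orth)
  also have "\<dots> = prod_list (map (\<lambda>b. lie b b) El)"
    by (simp add: prod.list_conv_set_nth atLeast0LessThan)
  also have "\<dots> = (\<Prod>b\<in>set El. lie b b)" by (rule prod.distinct_set_conv_list[OF El(2), symmetric])
  also have "\<dots> = (\<Prod>b\<in>E. lie b b)" by (simp only: El(1))
  finally have gEl: "gram_det El = (\<Prod>b\<in>E. lie b b)" .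
  have pneg: "(\<Prod>b\<in>E. lie b b) < 0"
  proof (rule ccontr)
    assume "\<not> ?thesis"
    then have "0 \<le> (\<Prod>b\<in>E. lie b b)" by simp
    then have "0 \<le> (Determinant.det (Matrix.mat ?m ?m (\<lambda>(i,j). C i j)))^2 * gram_det El"
      unfolding gEl by (intro mult_nonneg_nonneg) simp_all
    then have "0 \<le> gram_det L0" unfolding g .
    with neg show False by simp
  qed
  have nz: "\<forall>b\<in>E. lie b b \<noteq> 0"
    using pneg prod_zero_iff[OF E(1), of "\<lambda>b. lie b b"] by auto
  have good: "goodset E" using E(1,4) nz unfolding goodset_def by auto
  obtain e where e: "e \<in> E" "lie e e < 0"
  proof -
    have "\<exists>e\<in>E. lie e e < 0"
    proof (rule ccontr)
      assume "\<not> ?thesis"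
      then have "0 \<le> (\<Prod>b\<in>E. lie b b)" by (intro prod_nonneg) auto
      with pneg show False by simp
    qed
    then show ?thesis using that by blast
  qed
  have pos: "\<forall>b\<in>E - {e}. lie b b > 0"
  proof (rule ccontr)
    assume "\<not> ?thesis"
    then obtain b where b0: "b \<in> E - {e}" "\<not> lie b b > 0" by blast
    then have b: "b \<in> E" "b \<noteq> e" "lie b b \<le> 0" by auto
    then have bneg: "lie b b < 0" using nz by (metis less_eq_real_def)
    have eb: "lie e b = 0" using E(4) b e unfolding orthset_def by auto
    have rest: "\<forall>c\<in>E - {e} - {b}. lie c c > 0"
    proof (rule ccontr)
      assume "\<not> ?thesis"
      then obtain c where c0: "c \<in> E - {e} - {b}" "\<not> lie c c > 0" by blast
      then have c: "c \<in> E" "c \<noteq> e" "c \<noteq> b" "lie c c \<le> 0" by auto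
      have "c \<noteq> 0" using nz c(1) by auto
      moreover have "lie e c = 0" "lie b c = 0" using E(4) b c e unfolding orthset_def by auto
      ultimately show False using neg3[of e b c, OF eb _ _ e(2) bneg c(4)] by blast
    qed
    have "(\<Prod>b\<in>E. lie b b) = lie e e * (\<Prod>b\<in>E - {e}. lie b b)"
      using E(1) e(1) by (simp add: prod.remove)
    also have "(\<Prod>b\<in>E - {e}. lie b b) = lie b b * (\<Prod>b\<in>E - {e} - {b}. lie b b)"
      using E(1) b by (simp add: prod.remove)
    finally have "(\<Prod>b\<in>E. lie b b) = (lie e e * lie b b) * (\<Prod>b\<in>E - {e} - {b}. lie b b)"
      by simp
    moreover have "lie e e * lie b b > 0" using e(2) bneg by (simp add: mult_neg_neg)
    moreover have "(\<Prod>b\<in>E - {e} - {b}. lie b b) > 0" using rest by (intro prod_pos) auto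
    ultimately have "(\<Prod>b\<in>E. lie b b) > 0" by simp
    with pneg show False by simp
  qed
  show ?thesis
    by (rule exI[of _ E], rule exI[of _ e]) (use good E(3) cE e pos in simp)
qed

lemma det_unitri_up:
  assumes "A \<in> carrier_mat n n" "\<forall>i<n. A $$ (i,i) = 1"
    "\<forall>i j. j < i \<longrightarrow> i < n \<longrightarrow> A $$ (i,j) = 0"
  shows "Determinant.det A = 1"
  using det_unitri[of A n] assms by blast

lemma sum_delta_nth:
  fixes n :: nat
  assumes "i < n"
  shows "(\<Sum>j<n. (if j = i then 1 else 0) *\<^sub>R v j) = (v i :: 'a::real_vector)"
proof -
  have "(\<Sum>j<n. (if j = i then 1 else 0) *\<^sub>R v j) = (\<Sum>j<n. if j = i then v j else 0)"
    by (rule sum.cong) auto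
  also have "\<dots> = v i" using assms by (subst sum.delta) auto
  finally show ?thesis .
qed

lemma gram_YS:
  fixes Xs :: "'n::finite lievec list"
  assumes dist: "distinct (Xs @ [S])" and w: "Y - P \<in> span (set (Xs @ [S]))"
    and orth: "\<forall>v\<in>set (Xs @ [S]). lie P v = 0"
  shows "gram_det (Xs @ [Y, S]) = lie P P * gram_det (Xs @ [S])"
proof -
  let ?k = "length Xs"
  obtain c where c: "Y - P = (\<Sum>j<length (Xs @ [S]). c j *\<^sub>R (Xs @ [S])!j)"
    using list_span_rep[OF dist w] by blast
  have "(\<Sum>j<length (Xs @ [S]). c j *\<^sub>R (Xs @ [S])!j) =
      (\<Sum>j<?k. c j *\<^sub>R (Xs @ [S])!j) + c ?k *\<^sub>R S"
    by (simp add: nth_append)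
  also have "(\<Sum>j<?k. c j *\<^sub>R (Xs @ [S])!j) = (\<Sum>j<?k. c j *\<^sub>R Xs!j)"
    by (rule sum.cong) (auto simp: nth_append)
  finally have Yeq: "Y = P + ((\<Sum>j<?k. c j *\<^sub>R Xs!j) + c ?k *\<^sub>R S)"
    using c by (simp add: algebra_simps)
  define P' where "P' = P + c ?k *\<^sub>R S"
  define C1 where "C1 i j = (if i = ?k then (if j < ?k then c j else if j = ?k then 1 else 0)
     else (if j = i then 1 else (0::real)))" for i j
  define C2 where "C2 i j = (if i = ?k then (if j = ?k then 1 else if j = Suc ?k then c ?k else 0)
     else (if j = i then 1 else (0::real)))" for i j
  have step1: "gram_det (Xs @ [Y, S]) =
      (Determinant.det (Matrix.mat (?k+2) (?k+2) (\<lambda>(i,j). C1 i j)))^2 * gram_det (Xs @ [P', S])"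
  proof (rule gram_cob)
    show "\<forall>i<?k+2. (Xs @ [Y, S]) ! i = (\<Sum>j<?k+2. C1 i j *\<^sub>R (Xs @ [P', S]) ! j)"
    proof (intro allI impI)
      fix i assume i: "i < ?k + 2"
      show "(Xs @ [Y, S]) ! i = (\<Sum>j<?k+2. C1 i j *\<^sub>R (Xs @ [P', S]) ! j)"
      proof (cases "i = ?k")
        case True
        have "(\<Sum>j<?k+2. C1 i j *\<^sub>R (Xs @ [P', S]) ! j) =
            (\<Sum>j<?k. C1 i j *\<^sub>R (Xs @ [P', S]) ! j) + C1 i ?k *\<^sub>R P' + C1 i (Suc ?k) *\<^sub>R S"
          by (simp add: numeral_2_eq_2 nth_append)
        also have "(\<Sum>j<?k. C1 i j *\<^sub>R (Xs @ [P', S]) ! j) = (\<Sum>j<?k. c j *\<^sub>R Xs ! j)"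
          by (rule sum.cong) (auto simp: nth_append C1_def True)
        finally show ?thesis using True Yeq by (simp add: C1_def P'_def algebra_simps nth_append)
      next
        case False
        have "(\<Sum>j<?k+2. C1 i j *\<^sub>R (Xs @ [P', S]) ! j) =
            (\<Sum>j<?k+2. (if j = i then 1 else 0) *\<^sub>R (Xs @ [P', S]) ! j)"
          by (rule sum.cong) (auto simp: C1_def False)
        also have "\<dots> = (Xs @ [P', S]) ! i" using i by (rule sum_delta_nth)
        also have "\<dots> = (Xs @ [Y, S]) ! i" using i False by (auto simp: nth_append)
        finally show ?thesis by simp
      qed
    qed
  qed simp_all
  have d1: "Determinant.det (Matrix.mat (?k+2) (?k+2) (\<lambda>(i,j). C1 i j)) = 1"
    by (rule det_unitri) (auto simp: C1_def)
  have step2: "gram_det (Xs @ [P', S]) =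
      (Determinant.det (Matrix.mat (?k+2) (?k+2) (\<lambda>(i,j). C2 i j)))^2 * gram_det (Xs @ [P, S])"
  proof (rule gram_cob)
    show "\<forall>i<?k+2. (Xs @ [P', S]) ! i = (\<Sum>j<?k+2. C2 i j *\<^sub>R (Xs @ [P, S]) ! j)"
    proof (intro allI impI)
      fix i assume i: "i < ?k + 2"
      show "(Xs @ [P', S]) ! i = (\<Sum>j<?k+2. C2 i j *\<^sub>R (Xs @ [P, S]) ! j)"
      proof (cases "i = ?k")
        case True
        have "(\<Sum>j<?k+2. C2 i j *\<^sub>R (Xs @ [P, S]) ! j) =
            (\<Sum>j<?k. C2 i j *\<^sub>R (Xs @ [P, S]) ! j) + C2 i ?k *\<^sub>R P + C2 i (Suc ?k) *\<^sub>R S"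
          by (simp add: numeral_2_eq_2 nth_append)
        also have "(\<Sum>j<?k. C2 i j *\<^sub>R (Xs @ [P, S]) ! j) = 0"
          by (rule sum.neutral) (auto simp: C2_def True)
        finally show ?thesis using True by (simp add: C2_def P'_def nth_append)
      next
        case False
        have "(\<Sum>j<?k+2. C2 i j *\<^sub>R (Xs @ [P, S]) ! j) =
            (\<Sum>j<?k+2. (if j = i then 1 else 0) *\<^sub>R (Xs @ [P, S]) ! j)"
          by (rule sum.cong) (auto simp: C2_def False)
        also have "\<dots> = (Xs @ [P, S]) ! i" using i by (rule sum_delta_nth)
        also have "\<dots> = (Xs @ [P', S]) ! i" using i False by (auto simp: nth_append)
        finally show ?thesis by simp
      qed
    qed
  qed simp_all
  have d2: "Determinant.det (Matrix.mat (?k+2) (?k+2) (\<lambda>(i,j). C2 i j)) = 1"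
    by (rule det_unitri_up) (auto simp: C2_def)
  have step3: "gram_det (Xs @ [P, S]) = lie P P * gram_det (Xs @ [S])"
    by (rule gram_laplace) (use orth in auto)
  show ?thesis using step1 step2 step3 d1 d2 by simp
qed

lemma goodset_insert:
  assumes "goodset F" "\<forall>b\<in>F. lie b a = 0" "lie a a \<noteq> 0"
  shows "goodset (insert a F)"
proof -
  have "\<forall>b\<in>F. lie a b = 0" using assms(2) lie_sym by metis
  then show ?thesis using assms unfolding goodset_def orthset_def by auto
qed

lemma exists_outside:
  fixes F :: "'n::finite lievec set"
  assumes "finite F" "card F \<le> CARD('n) + 2"
  shows "\<exists>y. y \<notin> span F"
proof (rule ccontr)
  assume "\<not> ?thesis"
  then have sp: "span F = UNIV" by auto
  have "dim (UNIV :: 'n lievec set) = dim (span F)" by (simp only: sp)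
  also have "\<dots> = dim F" by (rule dim_span)
  also have "\<dots> \<le> card F" by (rule dim_le_card'[OF assms(1)])
  finally have "DIM('n lievec) \<le> CARD('n) + 2" using assms(2) by (simp only: dim_UNIV)
  moreover have "DIM('n lievec) = CARD('n) + 3" by (simp add: DIM_cart)
  ultimately show False by simp
qed

lemma negvec:
  fixes e :: "'n::finite lievec"
  shows "\<exists>x. lie x e = 0 \<and> lie x x < 0"
proof -
  obtain e0 e1 e2 e3 where e: "e = (e0, e1, e2, e3)" by (cases e) auto
  show ?thesis
  proof (cases "e3 \<noteq> 0 \<or> e2 \<noteq> e0")
    case True
    let ?x = "(e3, 0, -e3, e2 - e0) :: 'n lievec"
    have "lie ?x e = 0" using e by (simp add: algebra_simps)
    moreover have "lie ?x ?x = - (2 * (e3 * e3)) - (e2 - e0) * (e2 - e0)" by (simp add: algebra_simps)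
    moreover have "e3 * e3 > 0 \<or> (e2 - e0) * (e2 - e0) > 0"
      using True by (metis not_real_square_gt_zero right_minus_eq)
    moreover have "e3 * e3 \<ge> 0" "(e2 - e0) * (e2 - e0) \<ge> 0" by simp_all
    ultimately have "lie ?x e = 0 \<and> lie ?x ?x < 0" by linarith
    then show ?thesis by (rule exI)
  next
    case False
    let ?x = "(1, 0, -1, 0) :: 'n lievec"
    have "lie ?x e = 0 \<and> lie ?x ?x < 0" using e False by simp
    then show ?thesis by (rule exI)
  qed
qed

theorem mainTheorem9:
  fixes Xs :: "'n::finite lievec list" and S Y :: "'n lievec"
  assumes n3: "CARD('n) \<ge> 3"
    and k_lo: "2 \<le> length Xs" and k_hi: "length Xs \<le> CARD('n) - 1"
    and Xs_proper: "\<forall>X\<in>set Xs. proper X"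
    and S_neg: "lie S S \<le> 0"
    and indep: "distinct (Xs @ [S]) \<and> independent (set (Xs @ [S]))"
    and Delta_neg: "gram_det (Xs @ [S]) < 0"
    and Y_proper: "proper Y"
    and Y_notin: "Y \<notin> span (set (Xs @ [S]))"
    and YS: "lie Y S \<noteq> 0"
  shows "(\<exists>Z. proper Z \<and> (\<forall>X\<in>set (Xs @ [S]). lie X Z = 0) \<and> lie Z Y = 0)
           \<longleftrightarrow> discr Xs Y S \<le> 0"
proof -
  define L0 where "L0 = Xs @ [S]"
  have dist: "distinct L0" and ind: "independent (set L0)" using indep unfolding L0_def by auto
  obtain E e where E: "goodset E" "span E = span (set L0)" "card E = length L0" "e \<in> E"
    "lie e e < 0" "\<forall>b\<in>E - {e}. lie b b > 0"
    using basis_setup[OF dist ind] Delta_neg unfolding L0_def by blast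
  have finE: "finite E" using E(1) unfolding goodset_def by simp
  define P where "P = Y - pr E Y"
  have Pspan: "lie v P = 0" if "v \<in> span E" for v
    unfolding P_def using res_orth[OF E(1) that] .
  have PL0: "\<forall>v\<in>set L0. lie P v = 0"
  proof
    fix v assume "v \<in> set L0"
    then have "v \<in> span E" using E(2) span_base by blast
    then show "lie P v = 0" using Pspan lie_sym[of P v] by simp
  qed
  have prY: "pr E Y \<in> span E" by (rule pr_span)
  have YP: "Y - P \<in> span (set L0)" using prY E(2) unfolding P_def by simp
  have gYS: "gram_det (Xs @ [Y, S]) = lie P P * gram_det L0"
    using gram_YS[of Xs S Y P] dist YP PL0 unfolding L0_def by simp
  have YY: "lie Y Y = 0" using Y_proper unfolding proper_def by simp
  have g2: "gram_det [Y, S] = - ((lie Y S)^2)"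
    using gram2[of Y S] YY by (simp add: lie_sym[of S Y] power2_eq_square)
  have G: "gram_det L0 < 0" using Delta_neg unfolding L0_def .
  have d: "(lie Y S)^2 > 0" using YS by simp
  have discr_eq: "discr Xs Y S = - lie P P / (lie Y S)^2"
    unfolding discr_def using gYS g2 G unfolding L0_def by (simp add: field_simps)
  have discr_iff: "discr Xs Y S \<le> 0 \<longleftrightarrow> lie P P \<ge> 0"
  proof -
    have "discr Xs Y S \<le> 0 \<longleftrightarrow> 0 \<le> lie P P / (lie Y S)^2" unfolding discr_eq by simp
    also have "\<dots> \<longleftrightarrow> 0 \<le> lie P P"
    proof
      assume h: "0 \<le> lie P P / (lie Y S)^2"
      have "0 \<le> lie P P / (lie Y S)^2 * (lie Y S)^2" using h d by (intro mult_nonneg_nonneg) simp_all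
      then show "0 \<le> lie P P" using d by simp
    next
      assume "0 \<le> lie P P"
      then show "0 \<le> lie P P / (lie Y S)^2" using d by (intro divide_nonneg_pos) simp_all
    qed
    finally show ?thesis .
  qed
  have ZL0: "lie v Z = 0" if "\<forall>X\<in>set L0. lie X Z = 0" "v \<in> span E" for v Z
    using lie_span_zero[of "set L0" Z v] that E(2) by simp
  show ?thesis
    unfolding discr_iff L0_def[symmetric]
  proof
    assume "\<exists>Z. proper Z \<and> (\<forall>X\<in>set L0. lie X Z = 0) \<and> lie Z Y = 0"
    then obtain Z where Z: "proper Z" "\<forall>X\<in>set L0. lie X Z = 0" "lie Z Y = 0" by blast
    show "lie P P \<ge> 0"
    proof (rule ccontr)
      assume neg: "\<not> lie P P \<ge> 0"
      have eS: "e \<in> span E" using E(4) span_base by blast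
      have "lie e P = 0" using Pspan[OF eS] .
      moreover have "lie e Z = 0" using ZL0[OF Z(2) eS] .
      moreover have "lie P Z = 0"
      proof -
        have "lie (pr E Y) Z = 0" using ZL0[OF Z(2) prY] .
        moreover have "lie Y Z = 0" using Z(3) lie_sym[of Y Z] by simp
        ultimately show ?thesis unfolding P_def by (simp add: lie_diff_left)
      qed
      moreover have "lie Z Z \<le> 0" "Z \<noteq> 0" using Z(1) unfolding proper_def by auto
      ultimately show False using neg3[of e P Z] E(5) neg by linarith
    qed
  next
    assume QP: "lie P P \<ge> 0"
    show "\<exists>Z. proper Z \<and> (\<forall>X\<in>set L0. lie X Z = 0) \<and> lie Z Y = 0"
    proof (cases "lie P P = 0")
      case True
      have "P \<noteq> 0"
      proof
        assume "P = 0"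
        then have "Y = pr E Y" unfolding P_def by simp
        then have "Y \<in> span (set L0)" using prY E(2) by simp
        then show False using Y_notin unfolding L0_def by simp
      qed
      moreover have "lie P Y = 0"
      proof -
        have YY': "pr E Y + P = Y" unfolding P_def by simp
        have "lie P (pr E Y + P) = lie P (pr E Y) + lie P P" by (rule lie_add_right)
        then have "lie P Y = lie P (pr E Y) + lie P P" unfolding YY' .
        moreover have "lie P (pr E Y) = 0" using Pspan[OF prY] lie_sym[of P "pr E Y"] by simp
        ultimately show ?thesis using True by simp
      qed
      moreover have "\<forall>X\<in>set L0. lie X P = 0"
      proof
        fix X assume "X \<in> set L0"
        then have "lie P X = 0" using PL0 by blast
        then show "lie X P = 0" using lie_sym[of X P] by simp
      qed
      ultimately show ?thesis using True unfolding proper_def by blast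
    next
      case False
      with QP have QPpos: "lie P P > 0" by simp
      define F1 where "F1 = insert P E"
      have g1: "goodset F1" unfolding F1_def
      proof (rule goodset_insert[OF E(1)])
        show "\<forall>b\<in>E. lie b P = 0" using Pspan span_base by blast
      qed (use QPpos in simp)
      have eF1: "e \<in> F1" using E(4) unfolding F1_def by simp
      have pos1: "\<forall>b\<in>F1 - {e}. lie b b > 0"
      proof
        fix b assume "b \<in> F1 - {e}"
        then have "b = P \<or> b \<in> E - {e}" unfolding F1_def by blast
        then show "lie b b > 0" using E(6) QPpos by blast
      qed
      obtain x where x: "lie x e = 0" "lie x x < 0" using negvec by blast
      define T where "T = x - pr F1 x"
      have "lie (pr F1 x) (pr F1 x) \<ge> 0"
      proof -
        have "lie (pr F1 x) (pr F1 x) = (\<Sum>b\<in>F1. (lie x b)^2 / lie b b)" by (rule pr_Q[OF g1])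
        also have "\<dots> \<ge> 0"
        proof (rule sum_nonneg)
          fix b assume b: "b \<in> F1"
          show "(lie x b)^2 / lie b b \<ge> 0"
          proof (cases "b = e")
            case True then show ?thesis using x(1) by simp
          next
            case False then have "lie b b > 0" using pos1 b by blast
            then show ?thesis by simp
          qed
        qed
        finally show ?thesis .
      qed
      then have QT: "lie T T < 0" using Q_split[OF g1, of x] x(2) unfolding T_def by linarith
      have Tspan: "lie v T = 0" if "v \<in> span F1" for v
        unfolding T_def using res_orth[OF g1 that] .
      define F2 where "F2 = insert T F1"
      have g2': "goodset F2" unfolding F2_def
      proof (rule goodset_insert[OF g1])
        show "\<forall>b\<in>F1. lie b T = 0" using Tspan span_base by blast
      qed (use QT in simp)
      have finF2: "finite F2" using g2' unfolding goodset_def by simp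
      have "card F2 \<le> CARD('n) + 2"
      proof -
        have "card F1 \<le> Suc (card E)" unfolding F1_def using finE by (simp add: card_insert_if)
        moreover have "card F2 \<le> Suc (card F1)"
          unfolding F2_def using g1 unfolding goodset_def by (simp add: card_insert_if)
        moreover have "card E = length Xs + 1" using E(3) unfolding L0_def by simp
        ultimately show ?thesis using k_hi n3 by linarith
      qed
      then obtain y where y: "y \<notin> span F2" using exists_outside[OF finF2] by blast
      define R where "R = y - pr F2 y"
      have Rspan: "lie v R = 0" if "v \<in> span F2" for v
        unfolding R_def using res_orth[OF g2' that] .
      have R0: "R \<noteq> 0"
      proof
        assume "R = 0"
        then have "y = pr F2 y" unfolding R_def by simp
        then show False using y pr_span[of F2 y] by simp
      qed
      have sp12: "span F1 \<subseteq> span F2" unfolding F2_def by (rule span_mono) auto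
      have spE1: "span E \<subseteq> span F1" unfolding F1_def by (rule span_mono) auto
      have TF2: "T \<in> span F2" unfolding F2_def by (intro span_base) simp
      have eF2: "e \<in> span F2" using eF1 sp12 span_base by blast
      have eT: "lie e T = 0" using Tspan eF1 span_base by blast
      have eR: "lie e R = 0" using Rspan[OF eF2] .
      have TR: "lie T R = 0" using Rspan[OF TF2] .
      have QR: "lie R R > 0"
      proof (rule ccontr)
        assume "\<not> lie R R > 0"
        then have "lie R R \<le> 0" by simp
        then show False using neg3[OF eT eR TR E(5) QT _ R0] by simp
      qed
      define t where "t = sqrt (lie R R / - lie T T)"
      have tt: "t * t = lie R R / - lie T T" unfolding t_def using QR QT
        by (simp add: divide_nonneg_pos)
      define Z where "Z = R + t *\<^sub>R T"
      have RT: "lie R T = 0" using TR lie_sym[of R T] by simp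
      have "lie Z Z = lie R R + t * t * lie T T"
        unfolding Z_def using TR RT by (simp add: lie_add_left lie_add_right lie_scale_left lie_scale_right)
      then have QZ: "lie Z Z = 0" using tt QT by (simp add: field_simps)
      have "lie Z R = lie R R" unfolding Z_def using TR by (simp add: lie_add_left lie_scale_left)
      then have Z0: "Z \<noteq> 0" using QR by (metis lie_zero_left less_irrefl)
      have Zspan: "lie v Z = 0" if "v \<in> span F1" for v
      proof -
        have "lie v R = 0" using Rspan that sp12 by blast
        moreover have "lie v T = 0" using Tspan that by blast
        ultimately show ?thesis unfolding Z_def by (simp add: lie_add_right lie_scale_right)
      qed
      have "\<forall>X\<in>set L0. lie X Z = 0"
      proof
        fix X assume "X \<in> set L0"
        then have "X \<in> span E" using E(2) span_base by blast
        then show "lie X Z = 0" using Zspan spE1 by blast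
      qed
      moreover have "lie Z Y = 0"
      proof -
        have YY': "pr E Y + P = Y" unfolding P_def by simp
        have "lie (pr E Y + P) Z = lie (pr E Y) Z + lie P Z" by (rule lie_add_left)
        then have "lie Y Z = lie (pr E Y) Z + lie P Z" unfolding YY' .
        moreover have "lie (pr E Y) Z = 0" using Zspan prY spE1 by blast
        moreover have "lie P Z = 0" using Zspan span_base unfolding F1_def by blast
        ultimately show ?thesis using lie_sym[of Z Y] by simp
      qed
      ultimately show ?thesis using QZ Z0 unfolding proper_def by blast
    qed
  qed
qed

end
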